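(* Let $n,k \in \mathbb{N}$ with $n \geq k$, and let $c_{n,k}$ be the smallest positive integer such that $c_{n,k} P^{(k)} \in E_n$ for every $P \in E_n$. Then $$c_{n,k} = \mathrm{lcm}\{d_{m,k} : k \leq m \leq n\}.$$ In particular, $c_{n,k}$ divides $q_{n,k}$.
   Context: For $n \in \mathbb{N}$, $E_n$ denotes the set of polynomials $P \in \mathbb{C}[X]$ of degree $\leq n$ (including the zero polynomial) such that $P(\mathbb{Z}) \subset \mathbb{Z}$. $P^{(k)}$ is the $k$-th derivative of $P$. For $n,k \in \mathbb{N}$ with $n \geq k$, define $$F_{n,k} = \sum_{\substack{i_1,\dots,i_k \in \mathbb{N}^* \\ i_1+\dots+i_k = n}} \frac{1}{i_1 i_2 \cdots i_k},$$ with the conventions $F_{0,0}=1$ and $F_{n,0}=0$ for $n \geq 1$; and $d_{n,k}$ is the denominator of the rational number $F_{n,k}$, i.e. the smallest positive integer $d$ with $dF_{n,k} \in \mathbb{Z}$. For $n,k \in \mathbb{N}$ with $n \geq k$, define $$q_{n,k} = \mathrm{lcm}\{i_1 i_2 \cdots i_k : i_1,\dots,i_k \in \mathbb{N}^*,\ i_1+\dots+i_k \leq n\},$$ with the convention $q_{n,0} = 1$. Here $\mathbb{N}^*$ denotes the positive integers. *)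

theory Defs
  imports Complex_Main "HOL-Computational_Algebra.Polynomial"
begin

text \<open>E_n: complex polynomials of degree at most n mapping the integers into the integers
  (the zero polynomial has degree 0, so it is included).\<close>
definition E :: "nat \<Rightarrow> complex poly set" where
  "E n = {P. degree P \<le> n \<and> (\<forall>z::int. poly P (of_int z) \<in> \<int>)}"

definition comps :: "nat \<Rightarrow> nat \<Rightarrow> nat list set" where
  "comps n k = {is. length is = k \<and> (\<forall>i\<in>set is. 0 < i) \<and> sum_list is = n}"

text \<open>F_{n,k}; the conventions F_{0,0}=1 and F_{n,0}=0 (n>=1) are automatic
  (the empty list is the unique composition of 0 into 0 parts).\<close>
definition F :: "nat \<Rightarrow> nat \<Rightarrow> rat" where
  "F n k = (\<Sum>is\<in>comps n k. 1 / of_nat (prod_list is))"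

definition d :: "nat \<Rightarrow> nat \<Rightarrow> nat" where
  "d n k = (LEAST d::nat. 0 < d \<and> of_nat d * F n k \<in> \<int>)"

text \<open>q_{n,k}; the convention q_{n,0}=1 is automatic (Lcm {1} = 1).\<close>
definition q :: "nat \<Rightarrow> nat \<Rightarrow> nat" where
  "q n k = Lcm {prod_list is | is. length is = k \<and> (\<forall>i\<in>set is. 0 < i) \<and> sum_list is \<le> n}"

definition c :: "nat \<Rightarrow> nat \<Rightarrow> nat" where
  "c n k = (LEAST c::nat. 0 < c \<and> (\<forall>P\<in>E n. smult (of_nat c) ((pderiv ^^ k) P) \<in> E n))"

end

theory Submission
  imports Defs
begin


definition dl :: "complex poly \<Rightarrow> complex poly" where
  "dl Q = pcompose Q [:1,1:] - Q"

lemma poly_dl[simp]: "poly (dl Q) x = poly Q (x+1) - poly Q x"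
  by (simp add: dl_def poly_pcompose add.commute)

lemma dl_add: "dl (P + Q) = dl P + dl Q"
  by (simp add: dl_def pcompose_add)
lemma dl_smult: "dl (smult a P) = smult a (dl P)"
  by (simp add: dl_def pcompose_smult smult_diff_right)
lemma dl_0[simp]: "dl 0 = 0"
  by (simp add: dl_def)

lemma dlp_add: "(dl^^m) (P + Q) = (dl^^m) P + (dl^^m) Q"
  by (induct m) (auto simp: dl_add)
lemma dlp_smult: "(dl^^m) (smult a P) = smult a ((dl^^m) P)"
  by (induct m) (auto simp: dl_smult)
lemma dlp_0[simp]: "(dl^^m) 0 = 0"
  by (induct m) auto
lemma dlp_sum: "(dl^^m) (\<Sum>i\<in>A. f i) = (\<Sum>i\<in>A. (dl^^m) (f i))"
  by (induct A rule: infinite_finite_induct) (auto simp: dlp_add)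

lemma pderiv_dl: "pderiv (dl Q) = dl (pderiv Q)"
  by (simp add: dl_def pderiv_diff pderiv_pcompose pderiv_pCons)
lemma pderiv_dlp: "pderiv ((dl^^m) Q) = (dl^^m) (pderiv Q)"
  by (induct m) (auto simp: pderiv_dl)

lemma pderiv_sum': "pderiv (\<Sum>i\<in>A. f i) = (\<Sum>i\<in>A. pderiv (f i))"
  by (induct A rule: infinite_finite_induct) (auto simp: pderiv_add)

lemma dl_const: "degree Q = 0 \<Longrightarrow> dl Q = 0"
  by (elim degree_eq_zeroE) (simp add: dl_def)

lemma degree_dl_less: assumes "degree Q > 0" shows "degree (dl Q) < degree Q"
proof -
  let ?R = "pcompose Q [:1,1:]"
  have dR: "degree ?R = degree Q" by (simp add: degree_pcompose)
  have lR: "lead_coeff ?R = lead_coeff Q" using lead_coeff_comp[of "[:1,1:]" Q] by simp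
  have le: "degree (dl Q) \<le> degree Q" unfolding dl_def using degree_diff_le[of ?R "degree Q" Q] dR by simp
  have c0: "coeff (dl Q) (degree Q) = 0" unfolding dl_def using dR lR by simp
  show ?thesis
  proof (rule ccontr)
    assume "\<not> ?thesis"
    then have "degree (dl Q) = degree Q" using le by simp
    then have "dl Q = 0" using c0 by (metis leading_coeff_0_iff)
    then show False using assms \<open>degree (dl Q) = degree Q\<close> by simp
  qed
qed

lemma degree_dl_le: "degree (dl Q) \<le> degree Q"
  by (cases "degree Q = 0") (auto simp: dl_const dest: degree_dl_less[of Q])

lemma degree_dlp_le: "degree ((dl^^m) Q) \<le> degree Q"
  by (induct m) (auto intro: order.trans[OF degree_dl_le])

lemma dlp_vanish: "degree Q < m \<Longrightarrow> (dl^^m) Q = 0"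
proof (induct m arbitrary: Q)
  case 0 then show ?case by simp
next
  case (Suc m)
  have e: "(dl^^Suc m) Q = (dl^^m) (dl Q)" by (simp add: funpow_Suc_right del: funpow.simps)
  show ?case
  proof (cases "degree Q = 0")
    case True then show ?thesis using e by (simp add: dl_const)
  next
    case False
    then have "degree (dl Q) < m" using degree_dl_less[of Q] Suc.prems by simp
    then show ?thesis using e Suc.hyps by simp
  qed
qed

definition intv :: "complex poly \<Rightarrow> bool" where
  "intv Q \<longleftrightarrow> (\<forall>z::int. poly Q (of_int z) \<in> \<int>)"

lemma intv_dl: "intv Q \<Longrightarrow> intv (dl Q)"
  unfolding intv_def by (auto) (metis Ints_diff of_int_1 of_int_add)

lemma intv_dlp: "intv Q \<Longrightarrow> intv ((dl^^m) Q)"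
  by (induct m) (auto intro: intv_dl)

lemma intv_from_dl: assumes "poly Q 0 \<in> \<int>" "intv (dl Q)" shows "intv Q"
  unfolding intv_def
proof
  fix z :: int
  show "poly Q (of_int z) \<in> \<int>"
  proof (induct z rule: int_induct[where k=0])
    case base then show ?case using assms by simp
  next
    case (step1 i)
    have "poly (dl Q) (of_int i) \<in> \<int>" using assms(2) by (simp add: intv_def)
    then have "poly Q (of_int i + 1) - poly Q (of_int i) \<in> \<int>" by simp
    then show ?case using step1(2) by (metis Ints_add diff_add_cancel of_int_1 of_int_add)
  next
    case (step2 i)
    have "poly (dl Q) (of_int (i - 1)) \<in> \<int>" using assms(2) unfolding intv_def by blast
    then have "poly Q (of_int (i - 1) + 1) - poly Q (of_int (i - 1)) \<in> \<int>" by (simp only: poly_dl)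
    moreover have "(of_int (i - 1) + 1 :: complex) = of_int i" by simp
    ultimately have "poly Q (of_int i) - poly Q (of_int (i - 1)) \<in> \<int>" by metis
    moreover have "poly Q (of_int (i-1)) = poly Q (of_int i) - (poly Q (of_int i) - poly Q (of_int (i-1)))" by simp
    ultimately show ?case using step2(2) by (metis Ints_diff)
  qed
qed



fun B :: "nat \<Rightarrow> complex poly" where
  "B 0 = 1"
| "B (Suc j) = smult (1 / of_nat (Suc j)) (B j * [:- of_nat j, 1:])"

declare B.simps(2)[simp del]

lemma poly_B: "poly (B j) x = x gchoose j"
proof (induct j)
  case 0 then show ?case by simp
next
  case (Suc j)
  have "x * (x gchoose j) = of_nat j * (x gchoose j) + of_nat (Suc j) * (x gchoose (Suc j))"
    by (rule gbinomial_mult_1)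
  then have "x gchoose (Suc j) = (x gchoose j) * (x - of_nat j) / of_nat (Suc j)"
    by (simp add: field_simps del: of_nat_Suc)
  then show ?case using Suc by (simp add: B.simps(2) field_simps del: of_nat_Suc)
qed

lemma dl_B_Suc: "dl (B (Suc j)) = B j"
proof -
  have "poly (dl (B (Suc j))) x = poly (B j) x" for x
    by (simp only: poly_dl poly_B gbinomial_Suc_Suc) simp
  then show ?thesis by (metis poly_eq_poly_eq_iff ext)
qed

lemma dl_1[simp]: "dl 1 = 0"
  by (rule dl_const) simp

lemma dl_B_0: "dl (B 0) = 0"
  by simp

lemma dlp_B: "(dl^^m) (B j) = (if m \<le> j then B (j - m) else 0)"
proof (induct m arbitrary: j)
  case 0 then show ?case by simp
next
  case (Suc m)
  have e: "(dl^^Suc m) (B j) = (dl^^m) (dl (B j))" by (simp add: funpow_Suc_right del: funpow.simps)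
  show ?case
  proof (cases j)
    case 0 then show ?thesis using e by (simp add: dl_B_0)
  next
    case (Suc j') then show ?thesis using e Suc.hyps by (simp add: dl_B_Suc)
  qed
qed

lemma B_at_0: "poly (B j) 0 = (if j = 0 then 1 else 0)"
  by (simp add: poly_B gbinomial_0_left)

lemma degree_B: "degree (B j) = j \<and> lead_coeff (B j) \<noteq> 0"
proof (induct j)
  case 0 then show ?case by simp
next
  case (Suc j)
  then have "B j \<noteq> 0" by auto
  have d: "degree (B j * [:-of_nat j,1:]) = Suc j" using degree_mult_eq[of "B j" "[:-of_nat j,1:]"] Suc \<open>B j \<noteq> 0\<close>
    by (simp del: mult_pCons_right)
  have lc2: "lead_coeff (B j * [:-of_nat j,1:]) = lead_coeff (B j)" by (simp only: lead_coeff_mult) simp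
  have lc: "coeff (B j) j \<noteq> 0" using Suc by metis
  then show ?case using Suc d lc2 by (simp add: B.simps(2) del: of_nat_Suc mult_pCons_right)
qed

lemma intv_B: "intv (B j)"
proof (induct j)
  case 0 then show ?case by (simp add: intv_def)
next
  case (Suc j)
  show ?case by (rule intv_from_dl) (use Suc in \<open>auto simp: B_at_0 dl_B_Suc\<close>)
qed

definition bb :: "nat \<Rightarrow> complex" where
  "bb i = (if i = 0 then 0 else (-1)^(i-1) / of_nat i)"

lemma pderiv_B_0: "poly (pderiv (B j)) 0 = bb j"
proof (induct j)
  case 0 then show ?case by (simp add: bb_def)
next
  case (Suc j)
  have "poly (pderiv (B (Suc j))) 0 = (1 / of_nat (Suc j)) * (poly (B j) 0 + poly (pderiv (B j)) 0 * (- of_nat j))"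
    by (simp add: B.simps(2) pderiv_smult pderiv_mult pderiv_pCons del: of_nat_Suc mult_pCons_right)
  also have "\<dots> = bb (Suc j)"
  proof (cases j)
    case 0 then show ?thesis by (simp add: bb_def)
  next
    case (Suc i)
    have n1: "(of_nat (Suc i) :: complex) \<noteq> 0" by (simp only: of_nat_eq_0_iff)
    have n2: "(of_nat (Suc (Suc i)) :: complex) \<noteq> 0" by (simp only: of_nat_eq_0_iff)
    have "(1 / of_nat (Suc j)) * (poly (B j) 0 + poly (pderiv (B j)) 0 * (- of_nat j))
       = (1 / of_nat (Suc (Suc i))) * (((-1)^i / of_nat (Suc i)) * (- of_nat (Suc i)))"
      using Suc \<open>poly (pderiv (B j)) 0 = bb j\<close> by (simp add: B_at_0 bb_def del: of_nat_Suc)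
    also have "\<dots> = (-1)^(Suc i) / of_nat (Suc (Suc i))" using n1 n2 by (simp del: of_nat_Suc)
    finally show ?thesis using Suc by (simp add: bb_def del: of_nat_Suc)
  qed
  finally show ?case .
qed



lemma deg_lower: "degree (p::complex poly) \<le> Suc N \<Longrightarrow> coeff p (Suc N) = 0 \<Longrightarrow> degree p \<le> N"
  by (metis le_SucE leading_coeff_0_iff degree_0 le0)

lemma base0: "degree Q \<le> N \<Longrightarrow> poly (pderiv Q) 0 = (\<Sum>i\<le>N. bb i * poly ((dl^^i) Q) 0)"
proof (induct N arbitrary: Q)
  case 0
  then have "pderiv Q = 0" by (simp add: pderiv_eq_0_iff)
  then show ?case by (simp add: bb_def)
next
  case (Suc N)
  define a where "a = coeff Q (Suc N) / coeff (B (Suc N)) (Suc N)"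
  define R where "R = Q - smult a (B (Suc N))"
  have dB: "degree (B (Suc N)) = Suc N" "coeff (B (Suc N)) (Suc N) \<noteq> 0" using degree_B[of "Suc N"] by metis+
  have "degree R \<le> Suc N" unfolding R_def using Suc.prems dB
    by (intro degree_diff_le) (auto intro: order.trans[OF degree_smult_le])
  moreover have "coeff R (Suc N) = 0" unfolding R_def a_def using dB by simp
  ultimately have dR: "degree R \<le> N" by (rule deg_lower)
  have IH: "poly (pderiv R) 0 = (\<Sum>i\<le>N. bb i * poly ((dl^^i) R) 0)" using Suc.hyps dR by blast
  have "(dl^^Suc N) R = 0" using dR by (intro dlp_vanish) simp
  then have R1: "poly (pderiv R) 0 = (\<Sum>i\<le>Suc N. bb i * poly ((dl^^i) R) 0)" using IH by simp
  have "(\<Sum>i\<le>Suc N. bb i * poly ((dl^^i) (B (Suc N))) 0) = (\<Sum>i\<le>Suc N. if i = Suc N then bb i else 0)"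
    by (rule sum.cong) (auto simp: dlp_B B_at_0)
  also have "\<dots> = bb (Suc N)" by simp
  finally have B1: "poly (pderiv (B (Suc N))) 0 = (\<Sum>i\<le>Suc N. bb i * poly ((dl^^i) (B (Suc N))) 0)"
    by (simp add: pderiv_B_0)
  have Q: "Q = R + smult a (B (Suc N))" unfolding R_def by simp
  have "poly (pderiv Q) 0 = poly (pderiv R) 0 + a * poly (pderiv (B (Suc N))) 0"
    by (subst Q) (simp add: pderiv_add pderiv_smult)
  also have "\<dots> = (\<Sum>i\<le>Suc N. bb i * poly ((dl^^i) R) 0) + a * (\<Sum>i\<le>Suc N. bb i * poly ((dl^^i) (B (Suc N))) 0)"
    by (simp only: R1 B1)
  also have "\<dots> = (\<Sum>i\<le>Suc N. bb i * poly ((dl^^i) R) 0 + a * (bb i * poly ((dl^^i) (B (Suc N))) 0))"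
    by (simp only: sum.distrib sum_distrib_left)
  also have "\<dots> = (\<Sum>i\<le>Suc N. bb i * poly ((dl^^i) Q) 0)"
  proof (rule sum.cong)
    fix i
    have "(dl^^i) Q = (dl^^i) R + smult a ((dl^^i) (B (Suc N)))" by (subst Q) (simp only: dlp_add dlp_smult)
    then show "bb i * poly ((dl^^i) R) 0 + a * (bb i * poly ((dl^^i) (B (Suc N))) 0) = bb i * poly ((dl^^i) Q) 0"
      by (simp add: ring_distribs mult.left_commute)
  qed simp
  finally show ?case .
qed

lemma dl_shift: "dl (pcompose Q [:x,1:]) = pcompose (dl Q) [:x,1:]"
proof -
  have "poly (dl (pcompose Q [:x,1:])) y = poly (pcompose (dl Q) [:x,1:]) y" for y
    by (simp add: poly_pcompose add_ac)
  then show ?thesis by (metis poly_eq_poly_eq_iff ext)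
qed

lemma dlp_shift: "(dl^^m) (pcompose Q [:x,1:]) = pcompose ((dl^^m) Q) [:x,1:]"
  by (induct m) (auto simp: dl_shift)

lemma base: "degree Q \<le> N \<Longrightarrow> pderiv Q = (\<Sum>i\<le>N. smult (bb i) ((dl^^i) Q))"
proof -
  assume a: "degree Q \<le> N"
  have "poly (pderiv Q) x = poly (\<Sum>i\<le>N. smult (bb i) ((dl^^i) Q)) x" for x
  proof -
    let ?Qx = "pcompose Q [:x,1:]"
    have "degree ?Qx \<le> N" using a by (simp add: degree_pcompose)
    then have e1: "poly (pderiv ?Qx) 0 = (\<Sum>i\<le>N. bb i * poly ((dl^^i) ?Qx) 0)" by (rule base0)
    have "pderiv [:x,1:] = 1" by (simp add: pderiv_pCons)
    then have "pderiv ?Qx = pcompose (pderiv Q) [:x,1:]" by (simp only: pderiv_pcompose mult_1_right)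
    then have e2: "poly (pderiv ?Qx) 0 = poly (pderiv Q) x" by (simp only: poly_pcompose) simp
    have e3: "poly ((dl^^i) ?Qx) 0 = poly ((dl^^i) Q) x" for i
      by (simp only: dlp_shift poly_pcompose) simp
    have e4: "poly (\<Sum>i\<le>N. smult (bb i) ((dl^^i) Q)) x = (\<Sum>i\<le>N. bb i * poly ((dl^^i) Q) x)"
      by (simp only: poly_sum poly_smult)
    have "poly (pderiv Q) x = (\<Sum>i\<le>N. bb i * poly ((dl^^i) ?Qx) 0)" using e1 e2 by simp
    also have "\<dots> = (\<Sum>i\<le>N. bb i * poly ((dl^^i) Q) x)" by (rule sum.cong[OF refl]) (simp only: e3)
    finally show ?thesis by (simp only: e4)
  qed
  then have "poly (pderiv Q) = poly (\<Sum>i\<le>N. smult (bb i) ((dl^^i) Q))" by (rule ext)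
  then show ?thesis by (simp only: poly_eq_poly_eq_iff)
qed



definition G :: "nat \<Rightarrow> nat \<Rightarrow> complex" where
  "G j k = (\<Sum>ys\<in>comps j k. prod_list (map bb ys))"

lemma sum_list_ge_length: "(\<forall>i\<in>set ys. 0 < i) \<Longrightarrow> length ys \<le> sum_list (ys::nat list)"
  by (induct ys) auto

lemma finite_comps: "finite (comps j k)"
proof (rule finite_subset)
  show "comps j k \<subseteq> {xs. set xs \<subseteq> {0..j} \<and> length xs = k}"
    unfolding comps_def using member_le_sum_list by fastforce
  show "finite {xs. set xs \<subseteq> {0..j} \<and> length xs = k}" by (rule finite_lists_length_eq) simp
qed

lemma comps_0: "comps j 0 = (if j = 0 then {[]} else {})"
  unfolding comps_def by auto

lemma G_0: "G j 0 = (if j = 0 then 1 else 0)"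
  by (simp add: G_def comps_0)

lemma comps_less: "j < k \<Longrightarrow> comps j k = {}"
  unfolding comps_def using sum_list_ge_length by fastforce

lemma comps_Suc: "comps j (Suc k) = (\<lambda>(i,ys). i # ys) ` (SIGMA i:{1..j}. comps (j-i) k)"
proof (rule set_eqI, rule iffI)
  fix xs assume "xs \<in> comps j (Suc k)"
  then obtain i ys where xs: "xs = i # ys" and h: "length ys = k" "0 < i" "\<forall>x\<in>set ys. 0 < x" "i + sum_list ys = j"
    unfolding comps_def by (cases xs) auto
  then show "xs \<in> (\<lambda>(i,ys). i # ys) ` (SIGMA i:{1..j}. comps (j-i) k)"
    unfolding comps_def by (auto intro!: image_eqI[of _ _ "(i, ys)"])
next
  fix xs assume "xs \<in> (\<lambda>(i,ys). i # ys) ` (SIGMA i:{1..j}. comps (j-i) k)"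
  then show "xs \<in> comps j (Suc k)" unfolding comps_def by auto
qed

lemma G_Suc: "G j (Suc k) = (\<Sum>i\<le>j. bb i * G (j-i) k)"
proof -
  have inj: "inj_on (\<lambda>(i,ys). i # ys) (SIGMA i:{1..j}. comps (j-i) k)"
    by (auto simp: inj_on_def)
  have "G j (Suc k) = (\<Sum>p\<in>(SIGMA i:{1..j}. comps (j-i) k). prod_list (map bb ((\<lambda>(i,ys). i # ys) p)))"
    unfolding G_def comps_Suc by (rule sum.reindex[OF inj, unfolded comp_def])
  also have "\<dots> = (\<Sum>(i,ys)\<in>(SIGMA i:{1..j}. comps (j-i) k). bb i * prod_list (map bb ys))"
    by (rule sum.cong) auto
  also have "\<dots> = (\<Sum>i\<in>{1..j}. \<Sum>ys\<in>comps (j-i) k. bb i * prod_list (map bb ys))"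
    by (rule sum.Sigma[symmetric]) (auto simp: finite_comps)
  also have "\<dots> = (\<Sum>i\<in>{1..j}. bb i * G (j-i) k)"
    by (simp add: G_def sum_distrib_left)
  also have "\<dots> = (\<Sum>i\<le>j. bb i * G (j-i) k)"
  proof -
    have "{..j} = insert 0 {1..j}" by auto
    then show ?thesis by (simp add: bb_def)
  qed
  finally show ?thesis .
qed

lemma smult_sum_right: "smult a (\<Sum>i\<in>A. f i) = (\<Sum>i\<in>A. smult a (f i))"
  by (induct A rule: infinite_finite_induct) (auto simp: smult_add_right)

lemma main_id: "degree Q \<le> N \<Longrightarrow> (pderiv^^k) Q = (\<Sum>j\<le>N. smult (G j k) ((dl^^j) Q))"
proof (induct k)
  case 0
  have "(\<Sum>j\<le>N. smult (G j 0) ((dl^^j) Q)) = (\<Sum>j\<le>N. if j = 0 then Q else 0)"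
    by (rule sum.cong) (auto simp: G_0)
  also have "\<dots> = Q" by simp
  finally show ?case by simp
next
  case (Suc k)
  define h where "h i m = smult (bb i * G m k) ((dl^^(i+m)) Q)" for i m
  have "(pderiv^^Suc k) Q = pderiv (\<Sum>m\<le>N. smult (G m k) ((dl^^m) Q))"
    using Suc by simp
  also have "\<dots> = (\<Sum>m\<le>N. smult (G m k) (pderiv ((dl^^m) Q)))"
    by (simp add: pderiv_sum' pderiv_smult)
  also have "\<dots> = (\<Sum>m\<le>N. \<Sum>i\<le>N. h i m)"
  proof (rule sum.cong[OF refl])
    fix m
    have "degree ((dl^^m) Q) \<le> N" using Suc.prems degree_dlp_le order.trans by blast
    then have "pderiv ((dl^^m) Q) = (\<Sum>i\<le>N. smult (bb i) ((dl^^i) ((dl^^m) Q)))" by (rule base)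
    then show "smult (G m k) (pderiv ((dl^^m) Q)) = (\<Sum>i\<le>N. h i m)"
      by (simp add: h_def smult_sum_right funpow_add mult.commute)
  qed
  also have "\<dots> = (\<Sum>i\<le>N. \<Sum>m\<le>N. h i m)" by (rule sum.swap)
  also have "\<dots> = (\<Sum>(i,m)\<in>{..N}\<times>{..N}. h i m)" by (simp add: sum.cartesian_product)
  also have "\<dots> = (\<Sum>(i,m)\<in>{(i,m). i+m \<le> N}. h i m)"
  proof (rule sum.mono_neutral_right)
    show "finite ({..N}\<times>{..N})" by simp
    show "{(i,m). i+m \<le> N} \<subseteq> {..N}\<times>{..N}" by auto
    show "\<forall>x\<in>{..N}\<times>{..N} - {(i,m). i+m \<le> N}. (case x of (i,m) \<Rightarrow> h i m) = 0"
    proof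
      fix x assume "x \<in> {..N}\<times>{..N} - {(i,m). i+m \<le> N}"
      then obtain i m where x: "x = (i,m)" "N < i + m" by auto
      then have "(dl^^(i+m)) Q = 0" using Suc.prems by (intro dlp_vanish) simp
      then show "(case x of (i,m) \<Rightarrow> h i m) = 0" using x by (simp add: h_def)
    qed
  qed
  also have "\<dots> = (\<Sum>j\<le>N. \<Sum>i\<le>j. h i (j-i))" by (rule sum.triangle_reindex_eq)
  also have "\<dots> = (\<Sum>j\<le>N. smult (G j (Suc k)) ((dl^^j) Q))"
  proof (rule sum.cong[OF refl])
    fix j
    have "(\<Sum>i\<le>j. h i (j-i)) = (\<Sum>i\<le>j. smult (bb i * G (j-i) k) ((dl^^j) Q))"
      by (rule sum.cong) (auto simp: h_def)
    also have "\<dots> = smult (G j (Suc k)) ((dl^^j) Q)" by (simp add: G_Suc smult_sum)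
    finally show "(\<Sum>i\<le>j. h i (j-i)) = smult (G j (Suc k)) ((dl^^j) Q)" .
  qed
  finally show ?case .
qed

lemma sign_prod: "(\<forall>i\<in>set ys. 0 < i) \<Longrightarrow>
   prod_list (map bb ys) = (-1)^(sum_list ys - length ys) / of_nat (prod_list ys)"
proof (induct ys)
  case Nil then show ?case by simp
next
  case (Cons i ys)
  have l: "length ys \<le> sum_list ys" using Cons.prems sum_list_ge_length by auto
  have i: "0 < i" using Cons.prems by auto
  have e: "(i - 1) + (sum_list ys - length ys) = sum_list (i # ys) - length (i # ys)"
    using l i by simp
  have "prod_list (map bb (i # ys)) = ((-1)^(i-1) / of_nat i) * ((-1)^(sum_list ys - length ys) / of_nat (prod_list ys))"
  proof -
    have IH: "prod_list (map bb ys) = (-1)^(sum_list ys - length ys) / of_nat (prod_list ys)"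
      using Cons by simp
    have "prod_list (map bb (i # ys)) = bb i * prod_list (map bb ys)" by simp
    also have "\<dots> = bb i * ((-1)^(sum_list ys - length ys) / of_nat (prod_list ys))" by (simp only: IH)
    finally show ?thesis using i by (simp add: bb_def)
  qed
  also have "\<dots> = (-1)^((i - 1) + (sum_list ys - length ys)) / (of_nat i * of_nat (prod_list ys))"
    by (simp add: power_add)
  also have "\<dots> = (-1)^(sum_list (i # ys) - length (i # ys)) / of_nat (prod_list (i # ys))"
    by (simp only: e) simp
  finally show ?case .
qed

lemma G_F: "G j k = (-1)^(j-k) * of_rat (F j k)"
proof -
  have "G j k = (\<Sum>ys\<in>comps j k. (-1)^(j-k) * (1 / of_nat (prod_list ys)))"
    unfolding G_def by (rule sum.cong) (auto simp: comps_def sign_prod)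
  also have "\<dots> = (-1)^(j-k) * of_rat (F j k)"
    by (simp add: F_def of_rat_sum of_rat_divide sum_distrib_left)
  finally show ?thesis .
qed



lemma d_props: "0 < d m k \<and> of_nat (d m k) * F m k \<in> \<int>"
proof -
  obtain a b where qb: "quotient_of (F m k) = (a, b)" by (cases "quotient_of (F m k)") auto
  have b0: "b > 0" using quotient_of_denom_pos[OF qb] .
  have "F m k = of_int a / of_int b" using quotient_of_div[OF qb] .
  then have "of_nat (nat b) * F m k = of_int a" using b0 by simp
  then have "\<exists>x::nat. 0 < x \<and> of_nat x * F m k \<in> \<int>" using b0 by (intro exI[of _ "nat b"]) simp
  then show ?thesis unfolding d_def by (rule LeastI_ex)
qed

lemma d_dvd_iff: "of_nat x * F m k \<in> \<int> \<longleftrightarrow> d m k dvd x"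
proof
  assume h: "of_nat x * F m k \<in> \<int>"
  define r where "r = x mod d m k"
  have "(of_nat x :: rat) = of_nat (x div d m k) * of_nat (d m k) + of_nat r"
    unfolding r_def by (metis of_nat_add of_nat_mult div_mult_mod_eq)
  then have "of_nat r * F m k = of_nat x * F m k - of_nat (x div d m k) * (of_nat (d m k) * F m k)"
    by (simp add: algebra_simps)
  also have "\<dots> \<in> \<int>" by (rule Ints_diff[OF h Ints_mult[OF Ints_of_nat conjunct2[OF d_props]]])
  finally have rI: "of_nat r * F m k \<in> \<int>" .
  have "r < d m k" unfolding r_def using d_props[of m k] by simp
  moreover have "r = 0"
  proof (rule ccontr)
    assume "r \<noteq> 0"
    then have "d m k \<le> r" unfolding d_def using rI by (intro Least_le) simp
    then show False using \<open>r < d m k\<close> by simp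
  qed
  then show "d m k dvd x" unfolding r_def by auto
next
  assume "d m k dvd x"
  then obtain t where "x = d m k * t" by auto
  then have "of_nat x * F m k = of_nat t * (of_nat (d m k) * F m k)" by simp
  also have "\<dots> \<in> \<int>" by (rule Ints_mult[OF Ints_of_nat conjunct2[OF d_props]])
  finally show "of_nat x * F m k \<in> \<int>" .
qed

lemma of_rat_Ints_iff: "(of_rat r :: complex) \<in> \<int> \<longleftrightarrow> r \<in> \<int>"
proof
  assume "(of_rat r :: complex) \<in> \<int>"
  then obtain i where "(of_rat r :: complex) = of_int i" by (auto elim: Ints_cases)
  then have "(of_rat r :: complex) = of_rat (of_int i)" by simp
  then have "r = of_int i" by (simp only: of_rat_eq_iff)
  then show "r \<in> \<int>" by simp
next
  assume "r \<in> \<int>"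
  then obtain i where "r = of_int i" by (auto elim: Ints_cases)
  then show "(of_rat r :: complex) \<in> \<int>" by simp
qed

lemma G_less: "j < k \<Longrightarrow> G j k = 0"
  by (simp add: G_def comps_less)

lemma degree_pderivp: "degree ((pderiv^^k) P) \<le> degree (P::complex poly)"
proof (induct k)
  case 0 then show ?case by simp
next
  case (Suc k)
  have "degree (pderiv ((pderiv^^k) P)) \<le> degree ((pderiv^^k) P)" by (simp add: degree_pderiv)
  then show ?case using Suc by simp
qed

lemma prod_list_pos: "\<forall>x\<in>set ys. 0 < x \<Longrightarrow> 0 < prod_list (ys::nat list)"
  by (induct ys) auto

lemma intv_E: "P \<in> E n \<longleftrightarrow> degree P \<le> n \<and> intv P"
  by (simp add: E_def intv_def)

lemma suff:
  assumes dv: "\<forall>m\<in>{k..n}. d m k dvd L" and P: "P \<in> E n"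
  shows "smult (of_nat L) ((pderiv^^k) P) \<in> E n"
proof -
  have dP: "degree P \<le> n" and iP: "intv P" using P by (auto simp: intv_E)
  have D: "(pderiv^^k) P = (\<Sum>j\<le>n. smult (G j k) ((dl^^j) P))" by (rule main_id[OF dP])
  have deg: "degree (smult (of_nat L) ((pderiv^^k) P)) \<le> n"
    using degree_pderivp[of k P] dP by (meson degree_smult_le order.trans)
  have LG: "of_nat L * G j k \<in> \<int>" if "j \<le> n" for j
  proof (cases "j < k")
    case True then show ?thesis by (simp add: G_less)
  next
    case False
    then have "d j k dvd L" using dv that by auto
    then have "of_nat L * F j k \<in> \<int>" by (simp add: d_dvd_iff)
    then have "(of_rat (of_nat L * F j k) :: complex) \<in> \<int>" by (simp only: of_rat_Ints_iff)
    then have "(-1)^(j-k) * (of_rat (of_nat L * F j k) :: complex) \<in> \<int>" by (intro Ints_mult) auto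
    then show ?thesis by (simp add: G_F of_rat_mult algebra_simps)
  qed
  have "intv (smult (of_nat L) ((pderiv^^k) P))"
    unfolding intv_def
  proof
    fix z :: int
    have "poly (smult (of_nat L) ((pderiv^^k) P)) (of_int z)
        = (\<Sum>j\<le>n. (of_nat L * G j k) * poly ((dl^^j) P) (of_int z))"
      by (simp add: D poly_sum sum_distrib_left mult.assoc)
    also have "\<dots> \<in> \<int>"
    proof (rule Ints_sum)
      fix j assume "j \<in> {..n}"
      then show "(of_nat L * G j k) * poly ((dl^^j) P) (of_int z) \<in> \<int>"
        using LG intv_dlp[OF iP, of j] by (intro Ints_mult[of "of_nat L * G j k"]) (auto simp: intv_def)
    qed
    finally show "poly (smult (of_nat L) ((pderiv^^k) P)) (of_int z) \<in> \<int>" .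
  qed
  then show ?thesis using deg by (simp add: intv_E)
qed

lemma nec:
  assumes H: "\<forall>P\<in>E n. smult (of_nat x) ((pderiv^^k) P) \<in> E n" and m: "m \<in> {k..n}"
  shows "d m k dvd x"
proof -
  have mn: "m \<le> n" "k \<le> m" using m by auto
  have "B m \<in> E n" using degree_B[of m] intv_B[of m] mn by (simp add: intv_E)
  then have "smult (of_nat x) ((pderiv^^k) (B m)) \<in> E n" using H by blast
  then have "intv (smult (of_nat x) ((pderiv^^k) (B m)))" by (simp add: intv_E)
  then have "poly (smult (of_nat x) ((pderiv^^k) (B m))) (of_int 0) \<in> \<int>" unfolding intv_def by blast
  moreover have "poly ((pderiv^^k) (B m)) 0 = G m k"
  proof -
    have "degree (B m) \<le> n" using degree_B[of m] mn by simp
    then have "poly ((pderiv^^k) (B m)) 0 = (\<Sum>j\<le>n. G j k * poly ((dl^^j) (B m)) 0)"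
      by (simp add: main_id poly_sum)
    also have "\<dots> = (\<Sum>j\<le>n. if j = m then G j k else 0)"
      by (rule sum.cong) (auto simp: dlp_B B_at_0)
    also have "\<dots> = G m k" using mn by simp
    finally show ?thesis .
  qed
  ultimately have "of_nat x * G m k \<in> \<int>" by simp
  then have "(-1)^(m-k) * (of_nat x * G m k) \<in> \<int>" by (rule Ints_mult[rotated]) auto
  moreover have "(-1)^(m-k) * (of_nat x * G m k) = (of_rat (of_nat x * F m k) :: complex)"
    by (simp add: G_F of_rat_mult algebra_simps flip: power_add mult_2)
  ultimately have "(of_rat (of_nat x * F m k) :: complex) \<in> \<int>" by simp
  then have "of_nat x * F m k \<in> \<int>" by (simp only: of_rat_Ints_iff)
  then show ?thesis by (simp add: d_dvd_iff)
qed

lemma d_dvd_q: assumes "m \<le> n" shows "d m k dvd q n k"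
proof -
  have "of_nat (q n k) * F m k = (\<Sum>ys\<in>comps m k. of_nat (q n k) / of_nat (prod_list ys))"
    by (simp add: F_def sum_distrib_left)
  also have "\<dots> \<in> \<int>"
  proof (rule Ints_sum)
    fix ys assume ys: "ys \<in> comps m k"
    then have "prod_list ys dvd q n k"
      unfolding q_def using assms by (intro dvd_Lcm) (auto simp: comps_def)
    then obtain t where t: "q n k = prod_list ys * t" by auto
    have "prod_list ys \<noteq> 0" using ys prod_list_pos by (auto simp: comps_def)
    then have "(of_nat (q n k) :: rat) / of_nat (prod_list ys) = of_nat t" by (simp add: t)
    then show "(of_nat (q n k) :: rat) / of_nat (prod_list ys) \<in> \<int>" by simp
  qed
  finally show ?thesis by (simp add: d_dvd_iff)
qed

theorem theorem2:
  fixes n k :: nat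
  assumes "k \<le> n"
  shows "c n k = Lcm ((\<lambda>m. d m k) ` {k..n}) \<and> c n k dvd q n k"
proof -
  define L where "L = Lcm ((\<lambda>m. d m k) ` {k..n})"
  have dv: "\<forall>m\<in>{k..n}. d m k dvd L" unfolding L_def by (auto intro: dvd_Lcm)
  have "0 \<notin> (\<lambda>m. d m k) ` {k..n}" using d_props by (metis image_iff less_irrefl)
  then have L0: "L \<noteq> 0" unfolding L_def by (subst Lcm_0_iff) auto
  have cL: "c n k = L" unfolding c_def
  proof (rule Least_equality)
    show "0 < L \<and> (\<forall>P\<in>E n. smult (of_nat L) ((pderiv^^k) P) \<in> E n)"
      using L0 suff[OF dv] by auto
  next
    fix y assume y: "0 < y \<and> (\<forall>P\<in>E n. smult (of_nat y) ((pderiv^^k) P) \<in> E n)"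
    then have "L dvd y" unfolding L_def by (intro Lcm_least) (auto intro: nec)
    then show "L \<le> y" using y by (intro dvd_imp_le) auto
  qed
  have "L dvd q n k" unfolding L_def by (intro Lcm_least) (auto intro: d_dvd_q)
  then show ?thesis using cL L_def by simp
qed


end
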